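(* In the dense network described in the context, for every arbitrarily small constant $\epsilon_1>0$, with high probability the minimum distance between any two nodes, and between any node and any antenna on a base-station boundary, is larger than $1/n^{1+\epsilon_1}$.
   Context: Dense network: a square of area $1$ partitioned into $m=n^{\beta}$ equal square cells ($\beta\in[0,1)$), each with a base station (BS) at its center occupying a disk of radius $\epsilon_0/\sqrt{m}$ ($\epsilon_0>0$ an arbitrarily small constant independent of $n$). Each BS has $l=n^{\gamma}$ antennas ($\gamma\in[0,1)$, $\beta+\gamma\le 1$, so $ml=O(n)$); antennas on the BS boundary are regularly spaced on the boundary circle (all $l$ of them if $l=O(\sqrt{n/m})$, otherwise $\sqrt{n/m}$ of them with the rest inside). $n$ nodes are placed independently and uniformly at random in the square minus the BS disks. "With high probability" means with probability tending to $1$ as $n\to\infty$. *)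

theory Defs
  imports "HOL-Probability.Probability"
begin

text \<open>For n nodes: m = n^beta cells, realised as k^2 cells with
 k = max 1 (floor (n^(beta/2))) cells per side; l = max 1 (floor (n^gamma)) antennas per BS.\<close>

definition cells_side :: "real \<Rightarrow> nat \<Rightarrow> nat" where
  "cells_side \<beta> n = max 1 (nat \<lfloor>real n powr (\<beta> / 2)\<rfloor>)"

definition num_antennas :: "real \<Rightarrow> nat \<Rightarrow> nat" where
  "num_antennas \<gamma> n = max 1 (nat \<lfloor>real n powr \<gamma>\<rfloor>)"

text \<open>Number of antennas placed on the boundary circle of each BS: all l of them if
 l = O(sqrt(n/m)) (i.e. gamma \<le> (1-beta)/2), otherwise sqrt(n/m) of them.\<close>
definition num_boundary_antennas :: "real \<Rightarrow> real \<Rightarrow> nat \<Rightarrow> nat" where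
  "num_boundary_antennas \<beta> \<gamma> n =
     (if \<gamma> \<le> (1 - \<beta>) / 2 then num_antennas \<gamma> n
      else nat \<lfloor>sqrt (real n / real ((cells_side \<beta> n)\<^sup>2))\<rfloor>)"

definition cells :: "nat \<Rightarrow> (nat \<times> nat) set" where
  "cells k = {..<k} \<times> {..<k}"

definition bs_center :: "nat \<Rightarrow> nat \<times> nat \<Rightarrow> real \<times> real" where
  "bs_center k c = ((2 * real (fst c) + 1) / (2 * real k), (2 * real (snd c) + 1) / (2 * real k))"

text \<open>BS disk radius eps0 / sqrt m = eps0 / k.\<close>
definition bs_radius :: "real \<Rightarrow> real \<Rightarrow> nat \<Rightarrow> real" where
  "bs_radius \<beta> \<epsilon>0 n = \<epsilon>0 / real (cells_side \<beta> n)"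

definition node_region :: "real \<Rightarrow> real \<Rightarrow> nat \<Rightarrow> (real \<times> real) set" where
  "node_region \<beta> \<epsilon>0 n =
     cbox (0, 0) (1, 1) - (\<Union>c\<in>cells (cells_side \<beta> n). cball (bs_center (cells_side \<beta> n) c) (bs_radius \<beta> \<epsilon>0 n))"

text \<open>Antennas regularly spaced on the boundary circle of each BS; the rotation offset
 theta n c of BS c is arbitrary.\<close>
definition boundary_antennas ::
  "real \<Rightarrow> real \<Rightarrow> real \<Rightarrow> (nat \<Rightarrow> nat \<times> nat \<Rightarrow> real) \<Rightarrow> nat \<Rightarrow> (real \<times> real) set" where
  "boundary_antennas \<beta> \<gamma> \<epsilon>0 \<theta> n =
     {bs_center (cells_side \<beta> n) c + bs_radius \<beta> \<epsilon>0 n *\<^sub>R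
        (cos (\<theta> n c + 2 * pi * real t / real (num_boundary_antennas \<beta> \<gamma> n)),
         sin (\<theta> n c + 2 * pi * real t / real (num_boundary_antennas \<beta> \<gamma> n)))
      | c t. c \<in> cells (cells_side \<beta> n) \<and> t < num_boundary_antennas \<beta> \<gamma> n}"

definition nodes_law :: "real \<Rightarrow> real \<Rightarrow> nat \<Rightarrow> (nat \<Rightarrow> real \<times> real) measure" where
  "nodes_law \<beta> \<epsilon>0 n = PiM {..<n} (\<lambda>_. uniform_measure lborel (node_region \<beta> \<epsilon>0 n))"

definition good_event ::
  "real \<Rightarrow> real \<Rightarrow> real \<Rightarrow> real \<Rightarrow> (nat \<Rightarrow> nat \<times> nat \<Rightarrow> real) \<Rightarrow> nat \<Rightarrow> (nat \<Rightarrow> real \<times> real) set" where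
  "good_event \<beta> \<gamma> \<epsilon>0 \<epsilon>1 \<theta> n =
     {x \<in> space (nodes_law \<beta> \<epsilon>0 n).
        (\<forall>i<n. \<forall>j<n. i \<noteq> j \<longrightarrow> dist (x i) (x j) > 1 / real n powr (1 + \<epsilon>1)) \<and>
        (\<forall>i<n. \<forall>a\<in>boundary_antennas \<beta> \<gamma> \<epsilon>0 \<theta> n. dist (x i) a > 1 / real n powr (1 + \<epsilon>1))}"

end

theory Submission
  imports Defs "HOL-Real_Asymp.Real_Asymp"
begin


lemma cball_sub_cbox:
  fixes a :: "real \<times> real"
  shows "cball a r \<subseteq> cbox (a - (r, r)) (a + (r, r))"
proof
  fix x assume "x \<in> cball a r"
  then have d: "dist a x \<le> r" by simp
  have "dist (fst a) (fst x) \<le> dist a x" "dist (snd a) (snd x) \<le> dist a x"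
    by (simp_all add: dist_fst_le dist_snd_le)
  with d show "x \<in> cbox (a - (r, r)) (a + (r, r))"
    by (cases a, cases x) (auto simp: cbox_Pair_iff dist_real_def abs_le_iff)
qed

lemma measure_cball_le:
  fixes a :: "real \<times> real"
  assumes "0 \<le> r"
  shows "measure lborel (cball a r) \<le> 4 * r^2"
proof -
  have "measure lborel (cball a r) \<le> measure lborel (cbox (a - (r, r)) (a + (r, r)))"
    by (rule measure_mono_fmeasurable[OF cball_sub_cbox]) (auto intro: fmeasurableI simp: emeasure_lborel_cbox_finite)
  also have "\<dots> = 4 * r^2" using assms
    by (cases a) (simp add: content_Pair power2_eq_square)
  finally show ?thesis .
qed

lemma region_props:
  assumes "0 < e0" "e0 < 1/2"
  shows "node_region b e0 n \<in> sets lborel"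
    and "node_region b e0 n \<subseteq> cbox (0,0) (1,1)"
    and "measure lborel (node_region b e0 n) \<ge> 1 - 4 * e0^2"
proof -
  define k where "k = cells_side b n"
  define U where "U = (\<Union>c\<in>cells k. cball (bs_center k c) (bs_radius b e0 n))"
  have R: "node_region b e0 n = cbox (0,0) (1,1) - U"
    unfolding node_region_def U_def k_def by simp
  have k1: "k \<ge> 1" unfolding k_def cells_side_def by simp
  have fin: "finite (cells k)" unfolding cells_def by simp
  have Us: "U \<in> sets lborel" unfolding U_def using fin by (intro sets.finite_UN) auto
  show "node_region b e0 n \<in> sets lborel" using Us unfolding R by auto
  show "node_region b e0 n \<subseteq> cbox (0,0) (1,1)" unfolding R by auto
  have rho: "bs_radius b e0 n = e0 / real k" unfolding bs_radius_def k_def by simp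
  have "measure lborel U \<le> (\<Sum>c\<in>cells k. measure lborel (cball (bs_center k c) (bs_radius b e0 n)))"
    unfolding U_def using fin by (intro measure_UNION_le) auto
  also have "\<dots> \<le> (\<Sum>c\<in>cells k. 4 * (e0 / real k)^2)"
    using assms by (intro sum_mono) (simp add: rho measure_cball_le)
  also have "\<dots> = 4 * e0^2"
    using k1 by (simp add: cells_def power2_eq_square field_simps)
  finally have mU: "measure lborel U \<le> 4 * e0^2" .
  have Uc: "compact U" unfolding U_def using fin by (intro compact_UN) auto
  have "measure lborel (cbox (0::real,0::real) (1,1)) \<le> measure lborel (cbox (0::real,0::real) (1,1) \<union> U)"
    by (rule measure_mono_fmeasurable) (auto intro!: fmeasurable_compact compact_Un Uc)
  also have "\<dots> = measure lborel (node_region b e0 n \<union> U)" unfolding R by (simp add: Un_commute)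
  also have "\<dots> \<le> measure lborel (node_region b e0 n) + measure lborel U"
    using Us R by (intro measure_Un_le) auto
  finally show "measure lborel (node_region b e0 n) \<ge> 1 - 4 * e0^2"
    using mU by (simp add: content_Pair)
qed

lemma unif_bound:
  assumes Rs: "R \<in> sets lborel" and Rsub: "R \<subseteq> cbox (0::real,0::real) (1,1)"
    and c: "0 < c" "c \<le> measure lborel R"
  shows "prob_space (uniform_measure lborel R)"
    and "0 \<le> r \<Longrightarrow> measure (uniform_measure lborel R) (cball a r) \<le> 4 * r^2 / c"
proof -
  have fin: "emeasure lborel R < \<infinity>"
    using emeasure_mono[OF Rsub, of lborel] emeasure_lborel_cbox_finite[of "(0::real,0::real)" "(1,1)"]
    by (simp add: le_less_trans)
  have nz: "emeasure lborel R \<noteq> 0"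
    using c fin by (auto simp: measure_def)
  show "prob_space (uniform_measure lborel R)"
    using fin nz by (intro prob_space_uniform_measure) auto
  assume r: "0 \<le> r"
  have "measure (uniform_measure lborel R) (cball a r) = measure lborel (R \<inter> cball a r) / measure lborel R"
    using fin nz by (intro measure_uniform_measure) auto
  also have "\<dots> \<le> measure lborel (cball a r) / measure lborel R"
    using c Rs by (intro divide_right_mono measure_mono_fmeasurable) (auto intro: fmeasurable_compact)
  also have "\<dots> \<le> 4 * r^2 / measure lborel R"
    using c by (intro divide_right_mono measure_cball_le r) auto
  also have "\<dots> \<le> 4 * r^2 / c"
    using c by (intro divide_left_mono) auto
  finally show "measure (uniform_measure lborel R) (cball a r) \<le> 4 * r^2 / c" .
qed



lemma pair_bound:
  fixes U :: "(real \<times> real) measure"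
  assumes U: "prob_space U" and sU: "sets U = sets borel"
    and B: "\<And>a. measure U (cball a r) \<le> q"
    and ij: "i \<in> I" "j \<in> I" "i \<noteq> j"
  shows "measure (PiM I (\<lambda>_. U)) {x \<in> space (PiM I (\<lambda>_. U)). dist (x i) (x j) \<le> r} \<le> q"
proof -
  interpret U: prob_space U by fact
  interpret UU: pair_prob_space U U ..
  let ?P = "PiM I (\<lambda>_. U)"
  define f where "f = (\<lambda>b::bool. if b then i else j)"
  have finj: "inj_on f UNIV" unfolding f_def inj_on_def using ij by auto
  have d1: "distr ?P (PiM UNIV (\<lambda>_::bool. U)) (\<lambda>\<omega>. \<lambda>b\<in>UNIV. \<omega> (f b)) = PiM UNIV (\<lambda>_::bool. U)"
    using distr_PiM_reindex[of I "\<lambda>_. U" f UNIV] finj ij U unfolding f_def by auto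
  have cb: "case_bool U U = (\<lambda>_. U)" by (rule ext) (simp split: bool.split)
  have d2: "U \<Otimes>\<^sub>M U = distr (PiM UNIV (\<lambda>_::bool. U)) (U \<Otimes>\<^sub>M U) (\<lambda>x. (x True, x False))"
    using pair_measure_eq_distr_PiM[of U U] cb by (simp add: U.sigma_finite_measure_axioms)
  have m1: "(\<lambda>\<omega>. \<lambda>b\<in>UNIV. \<omega> (f b)) \<in> measurable ?P (PiM UNIV (\<lambda>_::bool. U))"
    using ij unfolding f_def by (intro measurable_restrict) auto
  have m2: "(\<lambda>x. (x True, x False)) \<in> measurable (PiM UNIV (\<lambda>_::bool. U)) (U \<Otimes>\<^sub>M U)"
    by measurable
  have d3: "distr ?P (U \<Otimes>\<^sub>M U) (\<lambda>\<omega>. (\<omega> i, \<omega> j)) = U \<Otimes>\<^sub>M U"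
  proof -
    have "U \<Otimes>\<^sub>M U = distr ?P (U \<Otimes>\<^sub>M U) ((\<lambda>x. (x True, x False)) \<circ> (\<lambda>\<omega>. \<lambda>b\<in>UNIV. \<omega> (f b)))"
      using d2 d1 distr_distr[OF m2 m1] by simp
    also have "(\<lambda>x. (x True, x False)) \<circ> (\<lambda>\<omega>. \<lambda>b\<in>UNIV. \<omega> (f b)) = (\<lambda>\<omega>. (\<omega> i, \<omega> j))"
      unfolding f_def by (auto simp: fun_eq_iff)
    finally show ?thesis by simp
  qed
  define D where "D = {p :: (real\<times>real) \<times> (real\<times>real). dist (fst p) (snd p) \<le> r}"
  have sD: "D \<in> sets (U \<Otimes>\<^sub>M U)"
  proof -
    have "closed D" unfolding D_def
      by (intro closed_Collect_le continuous_intros)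
    then have "D \<in> sets borel" by auto
    then show ?thesis using sets_pair_measure_cong[OF sU sU] by (simp only: borel_prod)
  qed
  have mg: "(\<lambda>\<omega>. (\<omega> i, \<omega> j)) \<in> measurable ?P (U \<Otimes>\<^sub>M U)"
    using ij by measurable
  have "measure ?P {x \<in> space ?P. dist (x i) (x j) \<le> r} = measure ?P ((\<lambda>\<omega>. (\<omega> i, \<omega> j)) -` D \<inter> space ?P)"
    unfolding D_def by (intro arg_cong[where f="measure ?P"]) auto
  also have "\<dots> = measure (U \<Otimes>\<^sub>M U) D"
    using measure_distr[OF mg sD] d3 by simp
  also have "\<dots> \<le> q"
  proof -
    have "emeasure (U \<Otimes>\<^sub>M U) D = (\<integral>\<^sup>+x. emeasure U (Pair x -` D) \<partial>U)"
      by (rule U.emeasure_pair_measure_alt[OF sD])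
    also have "\<dots> \<le> (\<integral>\<^sup>+x. ennreal q \<partial>U)"
    proof (intro nn_integral_mono)
      fix x
      have "Pair x -` D = cball x r" unfolding D_def by (auto simp: cball_def)
      then show "emeasure U (Pair x -` D) \<le> ennreal q"
        using B[of x] by (simp add: U.emeasure_eq_measure ennreal_leI)
    qed
    also have "\<dots> = ennreal q" by (simp add: U.emeasure_space_1)
    finally have "emeasure (U \<Otimes>\<^sub>M U) D \<le> ennreal q" .
    moreover have "0 \<le> q" using B[of undefined] measure_nonneg[of U] by (rule order_trans[rotated]) 
    ultimately show ?thesis by (simp add: UU.emeasure_eq_measure)
  qed
  finally show ?thesis .
qed

lemma single_bound:
  fixes U :: "(real \<times> real) measure"
  assumes U: "prob_space U" and sU: "sets U = sets borel"
    and B: "measure U (cball a r) \<le> q"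
    and i: "i \<in> I"
  shows "measure (PiM I (\<lambda>_. U)) {x \<in> space (PiM I (\<lambda>_. U)). dist (x i) a \<le> r} \<le> q"
proof -
  let ?P = "PiM I (\<lambda>_. U)"
  have d: "distr ?P U (\<lambda>\<omega>. \<omega> i) = U" using distr_PiM_component[of I "\<lambda>_. U" i] U i by auto
  have mg: "(\<lambda>\<omega>. \<omega> i) \<in> measurable ?P U" using i by measurable
  have s: "cball a r \<in> sets U" using sU by auto
  have "measure ?P {x \<in> space ?P. dist (x i) a \<le> r} = measure ?P ((\<lambda>\<omega>. \<omega> i) -` cball a r \<inter> space ?P)"
    by (intro arg_cong[where f="measure ?P"]) (auto simp: dist_commute)
  also have "\<dots> = measure U (cball a r)"
    using measure_distr[OF mg s] d by simp
  finally show ?thesis using B by simp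
qed



lemma antennas_image:
  "boundary_antennas b g e0 th n = (\<lambda>(c,t). bs_center (cells_side b n) c + bs_radius b e0 n *\<^sub>R
        (cos (th n c + 2 * pi * real t / real (num_boundary_antennas b g n)),
         sin (th n c + 2 * pi * real t / real (num_boundary_antennas b g n)))) `
     (cells (cells_side b n) \<times> {..<num_boundary_antennas b g n})"
  unfolding boundary_antennas_def by auto

lemma antennas_finite: "finite (boundary_antennas b g e0 th n)"
  unfolding antennas_image cells_def by auto

lemma k_bound:
  assumes "0 \<le> b" "n \<ge> 1"
  shows "real (cells_side b n) \<le> real n powr (b/2)" "real (cells_side b n) \<ge> 1"
proof -
  have "real n powr (b/2) \<ge> 1" using assms by (intro ge_one_powr_ge_zero) auto
  then have "\<lfloor>real n powr (b/2)\<rfloor> \<ge> 1" by (metis floor_mono floor_one)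
  then show "real (cells_side b n) \<le> real n powr (b/2)" "real (cells_side b n) \<ge> 1"
    unfolding cells_side_def by (auto simp: max_def) 
qed

lemma antennas_card:
  assumes "0 \<le> b" "b < 1" "0 \<le> g" "b + g \<le> 1" "n \<ge> 1"
  shows "real (card (boundary_antennas b g e0 th n)) \<le> real n"
proof -
  define k where "k = cells_side b n"
  define nb where "nb = num_boundary_antennas b g n"
  have "card (boundary_antennas b g e0 th n) \<le> card (cells k \<times> {..<nb})"
    unfolding antennas_image k_def nb_def by (rule card_image_le) (auto simp: cells_def)
  also have "\<dots> = k * k * nb" by (simp add: cells_def card_cartesian_product)
  finally have c: "real (card (boundary_antennas b g e0 th n)) \<le> real k * real k * real nb"
    by (metis of_nat_le_iff of_nat_mult)
  have k1: "real k \<le> real n powr (b/2)" "real k \<ge> 1" using k_bound[OF assms(1,5)] by (auto simp: k_def)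
  have n0: "real n > 0" using assms by auto
  have kk: "real k * real k \<le> real n powr b"
  proof -
    have "real k * real k \<le> real n powr (b/2) * real n powr (b/2)" using k1 by (intro mult_mono) auto
    also have "\<dots> = real n powr b" by (simp flip: powr_add)
    finally show ?thesis .
  qed
  show ?thesis
  proof (cases "g \<le> (1 - b) / 2")
    case True
    have "real nb \<le> real n powr g"
    proof -
      have "real n powr g \<ge> 1" using assms by (intro ge_one_powr_ge_zero) auto
      then have "\<lfloor>real n powr g\<rfloor> \<ge> 1" by (metis floor_mono floor_one)
      then show ?thesis using True unfolding nb_def num_boundary_antennas_def num_antennas_def
        by (auto simp: max_def)
    qed
    then have "real k * real k * real nb \<le> real n powr b * real n powr g"
      using kk by (intro mult_mono) auto
    also have "\<dots> = real n powr (b + g)" by (simp add: powr_add)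
    also have "\<dots> \<le> real n powr 1" using assms by (intro powr_mono) auto
    finally show ?thesis using c n0 by simp
  next
    case False
    have "real nb \<le> sqrt (real n / real (k^2))"
      using False unfolding nb_def num_boundary_antennas_def k_def by simp
    also have "\<dots> = sqrt (real n) / real k" using k1 by (simp add: real_sqrt_divide)
    finally have nbb: "real nb \<le> sqrt (real n) / real k" .
    have "real k * real k * real nb \<le> real k * real k * (sqrt (real n) / real k)"
      using nbb k1 by (intro mult_left_mono) auto
    also have "\<dots> = real k * sqrt (real n)" using k1 by simp
    also have "\<dots> \<le> real n powr (b/2) * real n powr (1/2)"
      using k1 n0 by (intro mult_mono) (auto simp: powr_half_sqrt)
    also have "\<dots> = real n powr (b/2 + 1/2)" by (simp add: powr_add)
    also have "\<dots> \<le> real n powr 1" using assms by (intro powr_mono) auto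
    finally show ?thesis using c n0 by simp
  qed
qed



lemma main_bound:
  fixes \<beta> \<gamma> \<epsilon>0 \<epsilon>1 :: real and \<theta> :: "nat \<Rightarrow> nat \<times> nat \<Rightarrow> real"
  assumes "0 \<le> \<beta>" "\<beta> < 1" "0 \<le> \<gamma>" "\<gamma> < 1" "\<beta> + \<gamma> \<le> 1"
    and "0 < \<epsilon>0" "\<epsilon>0 < 1 / 2" and "0 < \<epsilon>1" and n1: "n \<ge> 1"
  shows "measure (nodes_law \<beta> \<epsilon>0 n) (good_event \<beta> \<gamma> \<epsilon>0 \<epsilon>1 \<theta> n)
           \<ge> 1 - 8 / (1 - 4 * \<epsilon>0^2) * real n^2 * (1 / real n powr (1 + \<epsilon>1))^2"
    and "measure (nodes_law \<beta> \<epsilon>0 n) (good_event \<beta> \<gamma> \<epsilon>0 \<epsilon>1 \<theta> n) \<le> 1"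
proof -
  define R where "R = node_region \<beta> \<epsilon>0 n"
  define U where "U = uniform_measure lborel R"
  define c where "c = 1 - 4 * \<epsilon>0^2"
  define r where "r = 1 / real n powr (1 + \<epsilon>1)"
  define q where "q = 4 * r^2 / c"
  define A where "A = boundary_antennas \<beta> \<gamma> \<epsilon>0 \<theta> n"
  let ?P = "PiM {..<n} (\<lambda>_. U)"
  have P: "nodes_law \<beta> \<epsilon>0 n = ?P" unfolding nodes_law_def U_def R_def ..
  have "\<epsilon>0^2 < (1/2)^2" using assms by (intro power_strict_mono) auto
  then have c0: "0 < c" unfolding c_def by (simp add: power2_eq_square)
  have r0: "0 \<le> r" unfolding r_def by simp
  have Rp: "R \<in> sets lborel" "R \<subseteq> cbox (0,0) (1,1)" "c \<le> measure lborel R"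
    using region_props[OF assms(6,7), of \<beta> n] unfolding R_def c_def by auto
  have Up: "prob_space U" unfolding U_def by (rule unif_bound(1)[OF Rp(1,2) c0 Rp(3)])
  have UB: "\<And>a. measure U (cball a r) \<le> q" unfolding U_def q_def
    by (rule unif_bound(2)[OF Rp(1,2) c0 Rp(3) r0])
  have sU: "sets U = sets borel" unfolding U_def by simp
  interpret PP: prob_space ?P using Up by (intro prob_space_PiM) auto
  define IJ where "IJ = {(i,j). i < n \<and> j < n \<and> i \<noteq> j}"
  define E where "E = (\<Union>(i,j)\<in>IJ. {x \<in> space ?P. dist (x i) (x j) \<le> r})"
  define F where "F = (\<Union>(i,a)\<in>{..<n} \<times> A. {x \<in> space ?P. dist (x i) a \<le> r})"
  have mE: "\<And>i j. i < n \<Longrightarrow> j < n \<Longrightarrow> {x \<in> space ?P. dist (x i) (x j) \<le> r} \<in> sets ?P"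
    unfolding U_def by measurable
  have mF: "\<And>i a. i < n \<Longrightarrow> {x \<in> space ?P. dist (x i) a \<le> r} \<in> sets ?P"
    unfolding U_def by measurable
  have finIJ: "finite IJ" unfolding IJ_def by (rule finite_subset[of _ "{..<n} \<times> {..<n}"]) auto
  have finA: "finite A" unfolding A_def by (rule antennas_finite)
  have sE: "E \<in> sets ?P" unfolding E_def using finIJ mE unfolding IJ_def by (intro sets.finite_UN) auto
  have sF: "F \<in> sets ?P" unfolding F_def using finA mF by (intro sets.finite_UN) auto
  have G: "good_event \<beta> \<gamma> \<epsilon>0 \<epsilon>1 \<theta> n = space ?P - (E \<union> F)"
    unfolding good_event_def P E_def F_def IJ_def A_def r_def by (auto simp: not_less) (metis not_less)+
  have "PP.prob E \<le> (\<Sum>p\<in>IJ. PP.prob ((\<lambda>(i,j). {x \<in> space ?P. dist (x i) (x j) \<le> r}) p))"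
    unfolding E_def
    by (rule measure_UNION_le[of IJ "\<lambda>(i,j). {x \<in> space ?P. dist (x i) (x j) \<le> r}"]) (use finIJ in \<open>auto simp: IJ_def mE\<close>)
  also have "\<dots> \<le> real (card IJ) * q"
    by (rule sum_bounded_above) (auto simp: IJ_def intro!: pair_bound[OF Up sU UB])
  also have "\<dots> \<le> real n ^ 2 * q"
  proof -
    have "card IJ \<le> card ({..<n} \<times> {..<n})" unfolding IJ_def by (rule card_mono) auto
    then have "real (card IJ) \<le> real n ^ 2" by (simp add: power2_eq_square flip: of_nat_mult)
    moreover have "0 \<le> q" unfolding q_def using c0 by auto
    ultimately show ?thesis by (rule mult_right_mono)
  qed
  finally have pE: "PP.prob E \<le> real n ^ 2 * q" .
  have "PP.prob F \<le> (\<Sum>p\<in>{..<n} \<times> A. PP.prob ((\<lambda>(i,a). {x \<in> space ?P. dist (x i) a \<le> r}) p))"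
    unfolding F_def
    by (rule measure_UNION_le[of "{..<n} \<times> A" "\<lambda>(i,a). {x \<in> space ?P. dist (x i) a \<le> r}"]) (auto simp: finA mF)
  also have "\<dots> \<le> real (card ({..<n} \<times> A)) * q"
    by (rule sum_bounded_above) (auto intro!: single_bound[OF Up sU UB])
  also have "\<dots> \<le> real n ^ 2 * q"
  proof -
    have "real (card A) \<le> real n" unfolding A_def using assms by (intro antennas_card) auto
    then have "real (card ({..<n} \<times> A)) \<le> real n ^ 2"
      by (simp add: card_cartesian_product power2_eq_square mult_left_mono)
    moreover have "0 \<le> q" unfolding q_def using c0 by auto
    ultimately show ?thesis by (rule mult_right_mono)
  qed
  finally have pF: "PP.prob F \<le> real n ^ 2 * q" .
  have "PP.prob (space ?P - (E \<union> F)) = 1 - PP.prob (E \<union> F)"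
    using sE sF by (intro PP.prob_compl) auto
  moreover have "PP.prob (E \<union> F) \<le> PP.prob E + PP.prob F"
    using sE sF by (intro measure_Un_le) auto
  ultimately have "PP.prob (space ?P - (E \<union> F)) \<ge> 1 - 2 * real n ^ 2 * q" using pE pF by linarith
  then show "measure (nodes_law \<beta> \<epsilon>0 n) (good_event \<beta> \<gamma> \<epsilon>0 \<epsilon>1 \<theta> n)
           \<ge> 1 - 8 / (1 - 4 * \<epsilon>0^2) * real n^2 * (1 / real n powr (1 + \<epsilon>1))^2"
    unfolding P G q_def r_def c_def by (simp add: field_simps)
  show "measure (nodes_law \<beta> \<epsilon>0 n) (good_event \<beta> \<gamma> \<epsilon>0 \<epsilon>1 \<theta> n) \<le> 1"
    unfolding P by (rule PP.prob_le_1)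
qed



theorem lemma6:
  fixes \<beta> \<gamma> \<epsilon>0 \<epsilon>1 :: real and \<theta> :: "nat \<Rightarrow> nat \<times> nat \<Rightarrow> real"
  assumes "0 \<le> \<beta>" "\<beta> < 1" "0 \<le> \<gamma>" "\<gamma> < 1" "\<beta> + \<gamma> \<le> 1"
    and "0 < \<epsilon>0" "\<epsilon>0 < 1 / 2" and "0 < \<epsilon>1"
  shows "(\<lambda>n. measure (nodes_law \<beta> \<epsilon>0 n) (good_event \<beta> \<gamma> \<epsilon>0 \<epsilon>1 \<theta> n)) \<longlonglongrightarrow> 1"
proof (rule tendsto_sandwich)
  define K where "K = 8 / (1 - 4 * \<epsilon>0^2)"
  show "\<forall>\<^sub>F n in sequentially. 1 - K * real n^2 * (1 / real n powr (1 + \<epsilon>1))^2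
      \<le> measure (nodes_law \<beta> \<epsilon>0 n) (good_event \<beta> \<gamma> \<epsilon>0 \<epsilon>1 \<theta> n)"
    using eventually_ge_at_top[of 1] 
    by eventually_elim (use main_bound(1)[OF assms] in \<open>simp add: K_def\<close>)
  show "\<forall>\<^sub>F n in sequentially. measure (nodes_law \<beta> \<epsilon>0 n) (good_event \<beta> \<gamma> \<epsilon>0 \<epsilon>1 \<theta> n) \<le> 1"
    using eventually_ge_at_top[of 1] 
    by eventually_elim (use main_bound(2)[OF assms] in simp)
  show "(\<lambda>n. 1 - K * real n^2 * (1 / real n powr (1 + \<epsilon>1))^2) \<longlonglongrightarrow> 1"
    using assms(8) by real_asymp
  show "(\<lambda>n. 1::real) \<longlonglongrightarrow> 1" by simp
qed

end
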